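(* Let $\Gamma:[0,1]\to\mathcal{D}$ be a continuous path, $s,t\in[0,1]$, and $H\le\Gamma_s$ a subgroup. The following are equivalent: (1) $J_{s,t}|_H$ is finite valued; (2) $J_{s,t}|_H$ is an injective homomorphism $H\to\mathrm{PSL}_2\mathbb{C}$; (3) $t\in I^s_\psi$ for all $\psi\in H$.
   Context: $\mathcal{D}$: discrete torsion-free subgroups of $\mathrm{PSL}_2\mathbb{C}$ with the Chabauty topology ($\Gamma_n\to\Gamma$ iff accumulation points of sequences $\psi_n\in\Gamma_n$ lie in $\Gamma$ and each element of $\Gamma$ is a limit of some $\psi_n\in\Gamma_n$). For a path $\Gamma$ with $\Gamma_t=\Gamma(t)$, $s\in[0,1]$, $\psi\in\Gamma_s$: a $\Gamma$-path through $\psi$ based at $s$ is a continuous $j:I\to\mathrm{PSL}_2\mathbb{C}$, $I\subseteq[0,1]$ an interval containing $s$, with $j(t)\in\Gamma_t$ for $t\in I$ and $j(s)=\psi$. Any two such paths agree on the intersection of their domains, so there is a maximal such interval $I^s_\psi$, carrying the path $j^s_\psi$. With $\overline{\mathrm{PSL}_2\mathbb{C}}=\mathrm{PSL}_2\mathbb{C}\cup\{\infty\}$, define $J_{s,t}:\Gamma_s\to\overline{\mathrm{PSL}_2\mathbb{C}}$ by $J_{s,t}(\psi)=j^s_\psi(t)$ if $t\in I^s_\psi$ and $\infty$ otherwise. A map into $\overline{\mathrm{PSL}_2\mathbb{C}}$ is finite valued if its image lies in $\mathrm{PSL}_2\mathbb{C}$. *)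

theory Defs
  imports "HOL-Analysis.Analysis"
begin

definition SL2C :: "(complex^2^2) set" where
  "SL2C = {A. det A = 1}"

typedef psl2c = "{{A, - A} | A :: complex^2^2. det A = 1}"
  morphisms Rep_psl Abs_psl
  by (rule exI[of _ "{mat 1, - mat 1}"]) (auto simp: det_I)

definition psl_of :: "complex^2^2 \<Rightarrow> psl2c" where
  "psl_of A = Abs_psl {A, - A}"

definition psl_rep :: "psl2c \<Rightarrow> complex^2^2" where
  "psl_rep x = (SOME A. A \<in> Rep_psl x)"

definition psl_one :: psl2c where
  "psl_one = psl_of (mat 1)"

definition psl_mult :: "psl2c \<Rightarrow> psl2c \<Rightarrow> psl2c" where
  "psl_mult x y = psl_of (psl_rep x ** psl_rep y)"

definition psl_inv :: "psl2c \<Rightarrow> psl2c" where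
  "psl_inv x = psl_of (matrix_inv (psl_rep x))"

definition psl_pow :: "psl2c \<Rightarrow> nat \<Rightarrow> psl2c" where
  "psl_pow x n = (psl_mult x ^^ n) psl_one"

definition psl_top :: "psl2c topology" where
  "psl_top = topology (\<lambda>U. openin (top_of_set SL2C) {A \<in> SL2C. psl_of A \<in> U})"

definition psl_subgroup :: "psl2c set \<Rightarrow> bool" where
  "psl_subgroup G \<longleftrightarrow> psl_one \<in> G \<and> (\<forall>x\<in>G. \<forall>y\<in>G. psl_mult x y \<in> G) \<and> (\<forall>x\<in>G. psl_inv x \<in> G)"

definition psl_discrete :: "psl2c set \<Rightarrow> bool" where
  "psl_discrete G \<longleftrightarrow> (\<forall>x\<in>G. \<exists>U. openin psl_top U \<and> U \<inter> G = {x})"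

definition psl_torsion_free :: "psl2c set \<Rightarrow> bool" where
  "psl_torsion_free G \<longleftrightarrow> (\<forall>x\<in>G. \<forall>n>0. psl_pow x n = psl_one \<longrightarrow> x = psl_one)"

definition DTF :: "psl2c set set" where
  "DTF = {G. psl_subgroup G \<and> psl_discrete G \<and> psl_torsion_free G}"

definition chabauty_lim :: "(nat \<Rightarrow> psl2c set) \<Rightarrow> psl2c set \<Rightarrow> bool" where
  "chabauty_lim Gs G \<longleftrightarrow>
     (\<forall>\<psi>. (\<forall>n. \<psi> n \<in> Gs n) \<longrightarrow>
        (\<forall>x. (\<exists>r. strict_mono r \<and> limitin psl_top (\<psi> \<circ> r) x sequentially) \<longrightarrow> x \<in> G)) \<and>
     (\<forall>x\<in>G. \<exists>\<psi>. (\<forall>n. \<psi> n \<in> Gs n) \<and> limitin psl_top \<psi> x sequentially)"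

text \<open>A continuous path [0,1] -> D (the Chabauty topology is metrizable, so sequential
  continuity is continuity).\<close>
definition D_path :: "(real \<Rightarrow> psl2c set) \<Rightarrow> bool" where
  "D_path \<Gamma> \<longleftrightarrow> (\<forall>t\<in>{0..1}. \<Gamma> t \<in> DTF) \<and>
     (\<forall>t\<in>{0..1}. \<forall>ts. (\<forall>n. ts n \<in> {0..1}) \<and> ts \<longlonglongrightarrow> t \<longrightarrow> chabauty_lim (\<Gamma> \<circ> ts) (\<Gamma> t))"

definition Gamma_path :: "(real \<Rightarrow> psl2c set) \<Rightarrow> real \<Rightarrow> psl2c \<Rightarrow> real set \<Rightarrow> (real \<Rightarrow> psl2c) \<Rightarrow> bool" where
  "Gamma_path \<Gamma> s \<psi> I j \<longleftrightarrow> is_interval I \<and> I \<subseteq> {0..1} \<and> s \<in> I \<and>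
     continuous_map (top_of_set I) psl_top j \<and> (\<forall>t\<in>I. j t \<in> \<Gamma> t) \<and> j s = \<psi>"

definition Imax :: "(real \<Rightarrow> psl2c set) \<Rightarrow> real \<Rightarrow> psl2c \<Rightarrow> real set" where
  "Imax \<Gamma> s \<psi> = \<Union>{I. \<exists>j. Gamma_path \<Gamma> s \<psi> I j}"

text \<open>None plays the role of the point at infinity.\<close>
definition J :: "(real \<Rightarrow> psl2c set) \<Rightarrow> real \<Rightarrow> real \<Rightarrow> psl2c \<Rightarrow> psl2c option" where
  "J \<Gamma> s t \<psi> = (if t \<in> Imax \<Gamma> s \<psi>
      then Some (THE g. \<exists>I j. Gamma_path \<Gamma> s \<psi> I j \<and> t \<in> I \<and> j t = g)
      else None)"

end

theory Submission
  imports Defs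
begin


lemma Rep_psl_ex: "\<exists>A. det A = 1 \<and> Rep_psl x = {A, - A}"
  using Rep_psl[of x] by auto

lemma psl_rep_in: "psl_rep x \<in> Rep_psl x"
proof -
  obtain A where "Rep_psl x = {A, - A}" using Rep_psl_ex by blast
  then have "A \<in> Rep_psl x" by simp
  then show ?thesis unfolding psl_rep_def by (rule someI)
qed

lemma Rep_psl_eq: "Rep_psl x = {psl_rep x, - psl_rep x}"
proof -
  obtain A where A: "Rep_psl x = {A, - A}" using Rep_psl_ex by blast
  then have "psl_rep x = A \<or> psl_rep x = - A" using psl_rep_in[of x] by simp
  then show ?thesis using A by (metis insert_commute minus_minus)
qed

lemma det_neg2: "det (- A :: complex^2^2) = det A"
  by (simp add: det_2)

lemma det_psl_rep: "det (psl_rep x) = 1"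
  using Rep_psl_ex[of x] psl_rep_in[of x] by (auto simp: det_neg2)

lemma Rep_psl_of: "det A = 1 \<Longrightarrow> Rep_psl (psl_of A) = {A, - A}"
  unfolding psl_of_def by (rule Abs_psl_inverse) auto

lemma self_Rep: "det A = 1 \<Longrightarrow> A \<in> Rep_psl (psl_of A)"
  by (simp add: Rep_psl_of)

lemma psl_of_neg: "psl_of (- A) = psl_of A"
  unfolding psl_of_def by (simp add: insert_commute)

lemma psl_of_rep: "psl_of (psl_rep x) = x"
  unfolding psl_of_def by (metis Rep_psl_eq Rep_psl_inverse)

lemma psl_rep_of: "det A = 1 \<Longrightarrow> psl_rep (psl_of A) = A \<or> psl_rep (psl_of A) = - A"
  using Rep_psl_eq[of "psl_of A"] Rep_psl_of[of A] by (metis doubleton_eq_iff minus_minus)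

lemma psl_of_eq_iff: "det A = 1 \<Longrightarrow> det B = 1 \<Longrightarrow> psl_of A = psl_of B \<longleftrightarrow> (A = B \<or> A = - B)"
  by (metis Rep_psl_of doubleton_eq_iff minus_minus psl_of_neg)

lemma in_Rep_psl: "X \<in> Rep_psl x \<longleftrightarrow> X = psl_rep x \<or> X = - psl_rep x"
  by (simp add: Rep_psl_eq)

lemma psl_of_Rep: "X \<in> Rep_psl x \<Longrightarrow> psl_of X = x"
  by (metis in_Rep_psl psl_of_neg psl_of_rep)

lemma det_Rep: "X \<in> Rep_psl x \<Longrightarrow> det X = 1"
  by (metis in_Rep_psl det_neg2 det_psl_rep)

lemma mmul_lneg: "(- A) ** (B :: complex^2^2) = - (A ** B)"
  by (simp add: matrix_matrix_mult_def vec_eq_iff sum_negf)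
lemma mmul_rneg: "A ** (- B :: complex^2^2) = - (A ** B)"
  by (simp add: matrix_matrix_mult_def vec_eq_iff sum_negf)

lemma psl_mult_Rep: "X \<in> Rep_psl x \<Longrightarrow> Y \<in> Rep_psl y \<Longrightarrow> psl_mult x y = psl_of (X ** Y)"
  unfolding psl_mult_def in_Rep_psl
  by (auto simp: mmul_lneg mmul_rneg psl_of_neg)

lemma psl_mult_of: "det A = 1 \<Longrightarrow> det B = 1 \<Longrightarrow> psl_mult (psl_of A) (psl_of B) = psl_of (A ** B)"
  by (simp add: Rep_psl_of psl_mult_Rep)

definition adj2 :: "complex^2^2 \<Rightarrow> complex^2^2" where
  "adj2 A = (\<chi> i j. if i = 1 \<and> j = 1 then A$2$2 else if i = 1 \<and> j = 2 then - A$1$2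
              else if i = 2 \<and> j = 1 then - A$2$1 else A$1$1)"

lemma adj2_right: "det A = 1 \<Longrightarrow> A ** adj2 A = mat 1"
  by (auto simp: det_2 adj2_def matrix_matrix_mult_def vec_eq_iff sum_2 mat_def forall_2 algebra_simps)
lemma adj2_left: "det A = 1 \<Longrightarrow> adj2 A ** A = mat 1"
  by (auto simp: det_2 adj2_def matrix_matrix_mult_def vec_eq_iff sum_2 mat_def forall_2 algebra_simps)

lemma matrix_inv_eq: "A ** B = mat 1 \<Longrightarrow> B ** A = mat 1 \<Longrightarrow> matrix_inv (A::complex^2^2) = B"
proof -
  assume h: "A ** B = mat 1" "B ** A = mat 1"
  let ?P = "\<lambda>A'. A ** A' = mat 1 \<and> A' ** A = mat 1"
  have "?P (matrix_inv A)" unfolding matrix_inv_def by (rule someI[of ?P B]) (use h in auto)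
  then have "matrix_inv A = matrix_inv A ** (A ** B)" using h by simp
  also have "\<dots> = B" using \<open>?P (matrix_inv A)\<close> by (simp add: matrix_mul_assoc)
  finally show ?thesis .
qed

lemma matrix_inv_det1: "det A = 1 \<Longrightarrow> matrix_inv A = adj2 A"
  by (simp add: adj2_left adj2_right matrix_inv_eq)

lemma det_adj2: "det (adj2 A) = det A"
  by (simp add: det_2 adj2_def)

lemma adj2_neg: "adj2 (- A) = - adj2 A"
  by (auto simp: adj2_def vec_eq_iff)

lemma psl_inv_Rep: "X \<in> Rep_psl x \<Longrightarrow> psl_inv x = psl_of (adj2 X)"
  unfolding psl_inv_def in_Rep_psl
  by (auto simp: matrix_inv_det1 det_psl_rep adj2_neg psl_of_neg)

lemma det_mult2: "det (A ** B) = det A * det (B :: complex^2^2)"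
  by (rule det_mul)

lemma psl_one_rep: "mat 1 \<in> Rep_psl psl_one"
  by (simp add: psl_one_def Rep_psl_of det_I)

lemma psl_assoc: "psl_mult (psl_mult x y) z = psl_mult x (psl_mult y z)"
proof -
  obtain X Y Z where R: "X \<in> Rep_psl x" "Y \<in> Rep_psl y" "Z \<in> Rep_psl z"
    using psl_rep_in by blast
  have d: "det X = 1" "det Y = 1" "det Z = 1" using R det_Rep by auto
  have "psl_mult x y = psl_of (X ** Y)" "psl_mult y z = psl_of (Y ** Z)"
    using R psl_mult_Rep by auto
  moreover have "psl_mult (psl_of (X ** Y)) z = psl_of ((X ** Y) ** Z)"
    using d R by (intro psl_mult_Rep self_Rep) (auto simp: det_mult2)
  moreover have "psl_mult x (psl_of (Y ** Z)) = psl_of (X ** (Y ** Z))"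
    using d R by (intro psl_mult_Rep self_Rep) (auto simp: det_mult2)
  ultimately show ?thesis by (simp add: matrix_mul_assoc)
qed

lemma psl_one_left: "psl_mult psl_one x = x"
  by (metis matrix_mul_lid psl_mult_Rep psl_of_rep psl_one_rep psl_rep_in)
lemma psl_one_right: "psl_mult x psl_one = x"
  by (metis matrix_mul_rid psl_mult_Rep psl_of_rep psl_one_rep psl_rep_in)

lemma psl_inv_right: "psl_mult x (psl_inv x) = psl_one"
proof -
  have "psl_inv x = psl_of (adj2 (psl_rep x))" using psl_inv_Rep psl_rep_in by blast
  then show ?thesis
    by (simp add: psl_mult_Rep[OF psl_rep_in self_Rep] det_adj2 det_psl_rep adj2_right psl_one_def)
qed

lemma psl_inv_left: "psl_mult (psl_inv x) x = psl_one"
proof -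
  have "psl_inv x = psl_of (adj2 (psl_rep x))" using psl_inv_Rep psl_rep_in by blast
  then show ?thesis
    by (simp add: psl_mult_Rep[OF self_Rep psl_rep_in] det_adj2 det_psl_rep adj2_left psl_one_def)
qed

lemma psl_cancel: "psl_mult x (psl_inv y) = psl_one \<Longrightarrow> x = y"
  by (metis psl_assoc psl_inv_left psl_one_left psl_one_right)

lemma psl_pow_add: "psl_pow x (a + b) = psl_mult (psl_pow x a) (psl_pow x b)"
  by (induction a) (auto simp: psl_pow_def psl_one_left psl_assoc)




definition pdist :: "psl2c \<Rightarrow> psl2c \<Rightarrow> real" where
  "pdist x y = min (norm (psl_rep x - psl_rep y)) (norm (psl_rep x + psl_rep y))"

lemma n1: "norm (- a - b) = norm (a + (b::'a::real_normed_vector))"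
proof - have "- a - b = - (a + b)" by simp then show ?thesis by (simp only: norm_minus_cancel) qed
lemma n2: "norm (- a - - b) = norm (a - (b::'a::real_normed_vector))"
proof - have "- a - - b = - (a - b)" by simp then show ?thesis by (simp only: norm_minus_cancel) qed
lemma n3: "norm (a - - b) = norm (a + (b::'a::real_normed_vector))"
  by simp

lemma pdist_le: "X \<in> Rep_psl x \<Longrightarrow> Y \<in> Rep_psl y \<Longrightarrow> pdist x y \<le> norm (X - Y)"
proof -
  assume "X \<in> Rep_psl x" "Y \<in> Rep_psl y"
  then have X: "X = psl_rep x \<or> X = - psl_rep x" and Y: "Y = psl_rep y \<or> Y = - psl_rep y"
    by (simp_all add: in_Rep_psl)
  have m1: "pdist x y \<le> norm (psl_rep x - psl_rep y)" and m2: "pdist x y \<le> norm (psl_rep x + psl_rep y)"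
    by (simp_all add: pdist_def)
  show ?thesis using X Y
  proof (elim disjE)
    assume "X = psl_rep x" "Y = psl_rep y" then show ?thesis using m1 by simp
  next
    assume "X = psl_rep x" "Y = - psl_rep y" then show ?thesis using m2 n3 by metis
  next
    assume "X = - psl_rep x" "Y = psl_rep y" then show ?thesis using m2 n1 by metis
  next
    assume "X = - psl_rep x" "Y = - psl_rep y" then show ?thesis using m1 n2 by metis
  qed
qed

lemma pdist_ex: "X \<in> Rep_psl x \<Longrightarrow> \<exists>Y\<in>Rep_psl y. pdist x y = norm (X - Y)"
proof -
  assume "X \<in> Rep_psl x"
  then have X: "X = psl_rep x \<or> X = - psl_rep x" by (simp add: in_Rep_psl)
  have Y: "psl_rep y \<in> Rep_psl y" "- psl_rep y \<in> Rep_psl y" by (simp_all add: in_Rep_psl)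
  show ?thesis
  proof (cases "norm (psl_rep x - psl_rep y) \<le> norm (psl_rep x + psl_rep y)")
    case True
    then have p: "pdist x y = norm (psl_rep x - psl_rep y)" by (simp add: pdist_def)
    show ?thesis using X
    proof
      assume "X = psl_rep x" then show ?thesis using p Y by blast
    next
      assume "X = - psl_rep x" then show ?thesis using p Y(2) n2 by metis
    qed
  next
    case False
    then have p: "pdist x y = norm (psl_rep x + psl_rep y)" by (simp add: pdist_def)
    show ?thesis using X
    proof
      assume "X = psl_rep x" then show ?thesis using p Y(2) n3 by metis
    next
      assume "X = - psl_rep x" then show ?thesis using p Y(1) n1 by metis
    qed
  qed
qed

lemma pdist_eq_0: "pdist x y = 0 \<longleftrightarrow> x = y"
proof
  assume "pdist x y = 0"
  then obtain Y where "Y \<in> Rep_psl y" "norm (psl_rep x - Y) = 0"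
    using pdist_ex[OF psl_rep_in] by metis
  then show "x = y" by (metis eq_iff_diff_eq_0 norm_eq_zero psl_of_Rep psl_of_rep)
next
  assume "x = y" then show "pdist x y = 0"
    using pdist_le[OF psl_rep_in psl_rep_in, of x x] by (simp add: pdist_def)
qed

lemma pdist_sym: "pdist x y = pdist y x"
  by (simp add: pdist_def norm_minus_commute add.commute)

lemma pdist_triangle: "pdist x y \<le> pdist x z + pdist y z"
proof -
  obtain X where X: "X \<in> Rep_psl x" "pdist z x = norm (psl_rep z - X)"
    using pdist_ex[OF psl_rep_in] by blast
  obtain Y where Y: "Y \<in> Rep_psl y" "pdist z y = norm (psl_rep z - Y)"
    using pdist_ex[OF psl_rep_in] by blast
  have "pdist x y \<le> norm (X - Y)" using X Y pdist_le by blast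
  also have "\<dots> \<le> norm (X - psl_rep z) + norm (psl_rep z - Y)"
  proof -
    have "X - Y = (X - psl_rep z) + (psl_rep z - Y)" by simp
    then show ?thesis by (metis norm_triangle_ineq)
  qed
  finally show ?thesis using X Y by (simp add: pdist_sym norm_minus_commute)
qed


instantiation psl2c :: metric_space
begin
definition dist_psl2c :: "psl2c \<Rightarrow> psl2c \<Rightarrow> real" where "dist_psl2c = pdist"
definition uniformity_psl2c :: "(psl2c \<times> psl2c) filter" where
  "(uniformity::(psl2c \<times> psl2c) filter) = (INF e\<in>{0 <..}. principal {(x, y). dist x y < e})"
definition open_psl2c :: "psl2c set \<Rightarrow> bool" where
  "(open::psl2c set \<Rightarrow> bool) U \<longleftrightarrow> (\<forall>x\<in>U. eventually (\<lambda>(x', y). x' = x \<longrightarrow> y \<in> U) uniformity)"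
instance proof
  fix x y z :: psl2c
  show "dist x y = 0 \<longleftrightarrow> x = y" by (simp add: dist_psl2c_def pdist_eq_0)
  show "dist x y \<le> dist x z + dist y z" by (simp add: dist_psl2c_def pdist_triangle)
qed (simp_all add: uniformity_psl2c_def open_psl2c_def)
end

lemma dist_le_Rep: "X \<in> Rep_psl x \<Longrightarrow> Y \<in> Rep_psl y \<Longrightarrow> dist x y \<le> norm (X - Y)"
  by (simp add: dist_psl2c_def pdist_le)
lemma dist_ex_Rep: "X \<in> Rep_psl x \<Longrightarrow> \<exists>Y\<in>Rep_psl y. dist x y = norm (X - Y)"
  by (simp add: dist_psl2c_def pdist_ex)
lemma dist_psl_of: "det A = 1 \<Longrightarrow> det B = 1 \<Longrightarrow> dist (psl_of A) (psl_of B) \<le> norm (A - B)"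
  by (simp add: dist_le_Rep self_Rep)

lemma istopology_psl: "istopology (\<lambda>U. openin (top_of_set SL2C) {A \<in> SL2C. psl_of A \<in> U})"
  unfolding istopology_def
proof (intro conjI allI impI)
  fix S T :: "psl2c set"
  assume "openin (top_of_set SL2C) {A \<in> SL2C. psl_of A \<in> S}" "openin (top_of_set SL2C) {A \<in> SL2C. psl_of A \<in> T}"
  then have "openin (top_of_set SL2C) ({A \<in> SL2C. psl_of A \<in> S} \<inter> {A \<in> SL2C. psl_of A \<in> T})" by blast
  moreover have "{A \<in> SL2C. psl_of A \<in> S} \<inter> {A \<in> SL2C. psl_of A \<in> T} = {A \<in> SL2C. psl_of A \<in> S \<inter> T}" by auto
  ultimately show "openin (top_of_set SL2C) {A \<in> SL2C. psl_of A \<in> S \<inter> T}" by simp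
next
  fix K :: "psl2c set set"
  assume "\<forall>S\<in>K. openin (top_of_set SL2C) {A \<in> SL2C. psl_of A \<in> S}"
  then have "openin (top_of_set SL2C) (\<Union>S\<in>K. {A \<in> SL2C. psl_of A \<in> S})" by blast
  moreover have "(\<Union>S\<in>K. {A \<in> SL2C. psl_of A \<in> S}) = {A \<in> SL2C. psl_of A \<in> \<Union>K}" by auto
  ultimately show "openin (top_of_set SL2C) {A \<in> SL2C. psl_of A \<in> \<Union>K}" by simp
qed

lemma openin_psl_top: "openin psl_top U \<longleftrightarrow> openin (top_of_set SL2C) {A \<in> SL2C. psl_of A \<in> U}"
  unfolding psl_top_def using istopology_psl by (simp add: topology_inverse')

lemma psl_top_euclidean: "psl_top = euclidean"
proof (rule topology_eq[THEN iffD2], intro allI)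
  fix U :: "psl2c set"
  show "openin psl_top U \<longleftrightarrow> openin euclidean U"
  proof
    assume "openin psl_top U"
    then have o: "openin (top_of_set SL2C) {A \<in> SL2C. psl_of A \<in> U}" by (simp add: openin_psl_top)
    show "openin euclidean U" unfolding open_openin[symmetric] open_dist
    proof (intro ballI)
      fix x assume "x \<in> U"
      have "psl_rep x \<in> {A \<in> SL2C. psl_of A \<in> U}"
        using \<open>x \<in> U\<close> by (simp add: SL2C_def det_psl_rep psl_of_rep)
      then obtain e where e: "e > 0" "\<And>B. B \<in> SL2C \<Longrightarrow> dist B (psl_rep x) < e \<Longrightarrow> psl_of B \<in> U"
        using o unfolding openin_euclidean_subtopology_iff by blast
      show "\<exists>e>0. \<forall>y. dist y x < e \<longrightarrow> y \<in> U"
      proof (intro exI[of _ e] conjI allI impI)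
        fix y assume "dist y x < e"
        then obtain Y where "Y \<in> Rep_psl y" "dist x y = norm (psl_rep x - Y)"
          using dist_ex_Rep psl_rep_in by blast
        moreover have "Y \<in> SL2C" using \<open>Y \<in> Rep_psl y\<close> by (simp add: SL2C_def det_Rep)
        ultimately show "y \<in> U" using e(2)[of Y] \<open>dist y x < e\<close> psl_of_Rep[of Y y]
          by (simp add: dist_commute dist_norm norm_minus_commute)
      qed (use e in auto)
    qed
  next
    assume "openin euclidean U"
    then have oU: "open U" by simp
    show "openin psl_top U" unfolding openin_psl_top openin_euclidean_subtopology_iff
    proof (intro conjI ballI)
      fix A assume A: "A \<in> {A \<in> SL2C. psl_of A \<in> U}"
      then obtain e where e: "e > 0" "\<And>y. dist y (psl_of A) < e \<Longrightarrow> y \<in> U"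
        using oU unfolding open_dist by blast
      show "\<exists>e>0. \<forall>x'\<in>SL2C. dist x' A < e \<longrightarrow> x' \<in> {A \<in> SL2C. psl_of A \<in> U}"
      proof (intro exI[of _ e] conjI ballI impI)
        fix B assume "B \<in> SL2C" "dist B A < e"
        then have "dist (psl_of B) (psl_of A) < e" using A dist_psl_of[of B A]
          by (auto simp: SL2C_def dist_norm)
        then show "B \<in> {A \<in> SL2C. psl_of A \<in> U}" using e \<open>B \<in> SL2C\<close> by auto
      qed (use e in auto)
    qed auto
  qed
qed




lemma lift_tendsto:
  assumes "(f \<longlongrightarrow> a) F"
  shows "\<exists>G. (\<forall>x. G x \<in> Rep_psl (f x)) \<and> (G \<longlongrightarrow> psl_rep a) F"
proof -
  define G where "G x = (SOME Y. Y \<in> Rep_psl (f x) \<and> dist a (f x) = norm (psl_rep a - Y))" for x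
  have G: "G x \<in> Rep_psl (f x) \<and> dist a (f x) = norm (psl_rep a - G x)" for x
    unfolding G_def by (rule someI_ex) (use dist_ex_Rep[OF psl_rep_in] in blast)
  have "((\<lambda>x. dist (f x) a) \<longlongrightarrow> 0) F" using assms tendsto_dist_iff by blast
  moreover have "dist (f x) a = dist (G x) (psl_rep a)" for x
    using G[of x] by (simp add: dist_commute dist_norm)
  ultimately have "((\<lambda>x. dist (G x) (psl_rep a)) \<longlongrightarrow> 0) F" by simp
  then show ?thesis using G tendsto_dist_iff by blast
qed

lemma tendsto_psl_of:
  assumes "(G \<longlongrightarrow> A) F" "\<And>x. det (G x) = 1" "det A = 1"
  shows "((\<lambda>x. psl_of (G x)) \<longlongrightarrow> psl_of A) F"
proof -
  have lim: "((\<lambda>x. norm (G x - A)) \<longlongrightarrow> 0) F" using assms(1) tendsto_dist_iff[of G A F] by (simp add: dist_norm)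
  have le: "dist (psl_of (G x)) (psl_of A) \<le> norm (G x - A)" for x
    using assms dist_psl_of by blast
  have ev1: "eventually (\<lambda>x. 0 \<le> dist (psl_of (G x)) (psl_of A)) F" by simp
  have ev2: "eventually (\<lambda>x. dist (psl_of (G x)) (psl_of A) \<le> norm (G x - A)) F"
    using le by (simp add: always_eventually)
  have "((\<lambda>x. dist (psl_of (G x)) (psl_of A)) \<longlongrightarrow> 0) F"
    by (rule tendsto_sandwich[OF ev1 ev2 tendsto_const lim])
  then show ?thesis using tendsto_dist_iff by blast
qed

lemma tendsto_mmul:
  assumes "(G \<longlongrightarrow> A) F" "(H \<longlongrightarrow> B) F"
  shows "((\<lambda>x. G x ** H x) \<longlongrightarrow> A ** (B::complex^2^2)) F"
  unfolding matrix_matrix_mult_def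
  by (intro tendsto_intros assms)

lemma tendsto_adj2:
  assumes "(G \<longlongrightarrow> A) F"
  shows "((\<lambda>x. adj2 (G x)) \<longlongrightarrow> adj2 A) F"
proof (rule vec_tendstoI)
  fix i :: 2
  show "((\<lambda>x. adj2 (G x) $ i) \<longlongrightarrow> adj2 A $ i) F"
  proof (rule vec_tendstoI)
    fix j :: 2
    have c: "((\<lambda>x. G x $ k $ l) \<longlongrightarrow> A $ k $ l) F" for k l
      by (intro tendsto_vec_nth assms)
    have "i = 1 \<or> i = 2" "j = 1 \<or> j = 2" using exhaust_2 by auto
    then show "((\<lambda>x. adj2 (G x) $ i $ j) \<longlongrightarrow> adj2 A $ i $ j) F"
      by (auto simp: adj2_def intro: tendsto_minus c)
  qed
qed

lemma tendsto_psl_mult: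
  assumes "(f \<longlongrightarrow> a) F" "(g \<longlongrightarrow> b) F"
  shows "((\<lambda>x. psl_mult (f x) (g x)) \<longlongrightarrow> psl_mult a b) F"
proof -
  obtain G where G: "\<And>x. G x \<in> Rep_psl (f x)" "(G \<longlongrightarrow> psl_rep a) F" using lift_tendsto[OF assms(1)] by blast
  obtain H where H: "\<And>x. H x \<in> Rep_psl (g x)" "(H \<longlongrightarrow> psl_rep b) F" using lift_tendsto[OF assms(2)] by blast
  have e: "psl_mult (f x) (g x) = psl_of (G x ** H x)" for x using G H psl_mult_Rep by blast
  have e2: "psl_mult a b = psl_of (psl_rep a ** psl_rep b)" by (simp add: psl_mult_def)
  show ?thesis unfolding e e2
  proof (rule tendsto_psl_of[OF tendsto_mmul[OF G(2) H(2)]])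
    fix x
    have "det (G x) = 1" "det (H x) = 1" using G(1)[of x] H(1)[of x] det_Rep by blast+
    then show "det (G x ** H x) = 1" by (simp add: det_mult2)
  qed (simp add: det_mult2 det_psl_rep)
qed

lemma tendsto_psl_inv:
  assumes "(f \<longlongrightarrow> a) F"
  shows "((\<lambda>x. psl_inv (f x)) \<longlongrightarrow> psl_inv a) F"
proof -
  obtain G where G: "\<And>x. G x \<in> Rep_psl (f x)" "(G \<longlongrightarrow> psl_rep a) F" using lift_tendsto[OF assms(1)] by blast
  have e: "psl_inv (f x) = psl_of (adj2 (G x))" for x using G psl_inv_Rep by blast
  have e2: "psl_inv a = psl_of (adj2 (psl_rep a))" using psl_inv_Rep psl_rep_in by blast
  show ?thesis unfolding e e2
    by (rule tendsto_psl_of[OF tendsto_adj2[OF G(2)]])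
       (use G det_Rep det_adj2 det_psl_rep in auto)
qed

lemma psl_bw:
  fixes x :: "nat \<Rightarrow> psl2c"
  assumes "\<And>n. dist (x n) psl_one \<le> r"
  shows "\<exists>l \<sigma>. strict_mono \<sigma> \<and> (x \<circ> \<sigma>) \<longlonglongrightarrow> l"
proof -
  define X :: "nat \<Rightarrow> complex^2^2" where "X n = (SOME Y. Y \<in> Rep_psl (x n) \<and> dist psl_one (x n) = norm (mat 1 - Y))" for n
  have X: "X n \<in> Rep_psl (x n) \<and> dist psl_one (x n) = norm (mat 1 - X n)" for n
    unfolding X_def by (rule someI_ex) (use dist_ex_Rep[OF psl_one_rep] in blast)
  have "norm (X n) \<le> norm (mat 1 :: complex^2^2) + r" for n
  proof -
    have "norm (X n) \<le> norm (mat 1 :: complex^2^2) + norm (mat 1 - X n)"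
      by (metis norm_triangle_sub add.commute norm_minus_commute)
    then show ?thesis using X[of n] assms[of n] by (simp add: dist_commute)
  qed
  then have "bounded (range X)" unfolding bounded_iff by blast
  then obtain L \<sigma> where L: "strict_mono \<sigma>" "(X \<circ> \<sigma>) \<longlonglongrightarrow> L"
    using bounded_imp_convergent_subsequence[of X] by metis
  have d: "det ((X \<circ> \<sigma>) n) = 1" for n using X det_Rep by auto
  have "((\<lambda>n. det ((X \<circ> \<sigma>) n)) \<longlongrightarrow> det L) sequentially"
    unfolding det_2 by (intro tendsto_intros L(2))
  then have "det L = 1" using d by (simp add: LIMSEQ_const_iff)
  have "((\<lambda>n. psl_of ((X \<circ> \<sigma>) n)) \<longlongrightarrow> psl_of L) sequentially"
    by (rule tendsto_psl_of[OF L(2) d \<open>det L = 1\<close>])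
  moreover have "psl_of ((X \<circ> \<sigma>) n) = (x \<circ> \<sigma>) n" for n using X psl_of_Rep by auto
  ultimately show ?thesis using L(1) by (metis (no_types, lifting) ext)
qed




lemma DTF_sub: "G \<in> DTF \<Longrightarrow> psl_subgroup G" by (simp add: DTF_def)
lemma DTF_one: "G \<in> DTF \<Longrightarrow> psl_one \<in> G" by (simp add: DTF_def psl_subgroup_def)
lemma DTF_mult: "G \<in> DTF \<Longrightarrow> x \<in> G \<Longrightarrow> y \<in> G \<Longrightarrow> psl_mult x y \<in> G" by (simp add: DTF_def psl_subgroup_def)
lemma DTF_inv: "G \<in> DTF \<Longrightarrow> x \<in> G \<Longrightarrow> psl_inv x \<in> G" by (simp add: DTF_def psl_subgroup_def)

lemma pow_0: "psl_pow x 0 = psl_one" by (simp add: psl_pow_def)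
lemma pow_1: "psl_pow x 1 = x" by (simp add: psl_pow_def psl_one_right)

lemma pow_in: "G \<in> DTF \<Longrightarrow> x \<in> G \<Longrightarrow> psl_pow x n \<in> G"
  by (induction n) (auto simp: psl_pow_def DTF_one DTF_mult)

lemma disc_ball: "G \<in> DTF \<Longrightarrow> g \<in> G \<Longrightarrow> \<exists>e>0. \<forall>h\<in>G. dist h g < e \<longrightarrow> h = g"
proof -
  assume G: "G \<in> DTF" "g \<in> G"
  then obtain U where U: "openin psl_top U" "U \<inter> G = {g}"
    by (auto simp: DTF_def psl_discrete_def)
  then have "open U" "g \<in> U" by (auto simp: psl_top_euclidean)
  then obtain e where "e > 0" "\<And>y. dist y g < e \<Longrightarrow> y \<in> U" unfolding open_dist by blast
  then show ?thesis using U(2) by blast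
qed

lemma escape:
  assumes G: "G \<in> DTF" and e: "e \<in> G" "e \<noteq> psl_one" and \<rho>: "\<rho> > 0"
  shows "\<exists>k. \<rho> \<le> dist (psl_pow e k) psl_one"
proof (rule ccontr)
  assume "\<not> ?thesis"
  then have b: "dist (psl_pow e k) psl_one \<le> \<rho>" for k by (simp add: not_le less_imp_le)
  obtain l \<sigma> where \<sigma>: "strict_mono \<sigma>" "((\<lambda>k. psl_pow e k) \<circ> \<sigma>) \<longlonglongrightarrow> l"
    using psl_bw[of "\<lambda>k. psl_pow e k", OF b] by blast
  define y where "y = (\<lambda>k. psl_pow e k) \<circ> \<sigma>"
  have ly: "y \<longlonglongrightarrow> l" using \<sigma> y_def by simp
  define d where "d n = psl_mult (psl_inv (y n)) (y (Suc n))" for n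
  have "d \<longlonglongrightarrow> psl_mult (psl_inv l) l"
    unfolding d_def by (intro tendsto_psl_mult tendsto_psl_inv ly LIMSEQ_Suc)
  then have ld: "d \<longlonglongrightarrow> psl_one" by (simp add: psl_inv_left)
  obtain \<epsilon> where \<epsilon>: "\<epsilon> > 0" "\<And>h. h \<in> G \<Longrightarrow> dist h psl_one < \<epsilon> \<Longrightarrow> h = psl_one"
    using disc_ball[OF G DTF_one[OF G]] by blast
  obtain N where N: "\<And>n. n \<ge> N \<Longrightarrow> dist (d n) psl_one < \<epsilon>"
    using tendstoD[OF ld \<epsilon>(1)] unfolding eventually_sequentially by blast
  define m where "m = \<sigma> (Suc N) - \<sigma> N"
  have "\<sigma> N < \<sigma> (Suc N)" using \<sigma>(1) by (simp add: strict_monoD)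
  then have m: "m > 0" "\<sigma> (Suc N) = \<sigma> N + m" unfolding m_def by auto
  have "d N = psl_pow e m"
    unfolding d_def y_def using m(2)
    by (simp add: psl_pow_add flip: psl_assoc) (simp add: psl_inv_left psl_one_left)
  moreover have "d N \<in> G" unfolding d_def y_def by (simp add: G e pow_in DTF_mult DTF_inv)
  ultimately have "psl_pow e m = psl_one" using \<epsilon>(2) N[of N] by simp
  then show False using G e m(1) by (auto simp: DTF_def psl_torsion_free_def)
qed

lemma conv_aux:
  fixes x :: "nat \<Rightarrow> 'a::metric_space"
  assumes "\<And>n. dist (x n) a < inverse (real (Suc n))"
  shows "x \<longlonglongrightarrow> a"
proof -
  have ev1: "eventually (\<lambda>n. 0 \<le> dist (x n) a) sequentially" by simp
  have ev2: "eventually (\<lambda>n. dist (x n) a \<le> inverse (real (Suc n))) sequentially"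
    using assms by (simp add: always_eventually less_imp_le)
  have "(\<lambda>n. dist (x n) a) \<longlonglongrightarrow> 0"
    by (rule tendsto_sandwich[OF ev1 ev2 tendsto_const LIMSEQ_inverse_real_of_nat])
  then show ?thesis using tendsto_dist_iff by blast
qed

lemma unif_disc:
  assumes D: "D_path \<Gamma>" and t0: "t0 \<in> {0..1}"
  shows "\<exists>\<epsilon>>0. \<forall>u\<in>{0..1}. dist u t0 < \<epsilon> \<longrightarrow> (\<forall>g\<in>\<Gamma> u. dist g psl_one < \<epsilon> \<longrightarrow> g = psl_one)"
proof (rule ccontr)
  assume "\<not> ?thesis"
  then have "\<forall>n. \<exists>u. u \<in> {0..1} \<and> dist u t0 < inverse (real (Suc n)) \<and>
      (\<exists>g. g \<in> \<Gamma> u \<and> dist g psl_one < inverse (real (Suc n)) \<and> g \<noteq> psl_one)"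
    by (metis inverse_positive_iff_positive of_nat_0_less_iff zero_less_Suc)
  then obtain u where u: "\<And>n. u n \<in> {0..1}" "\<And>n. dist (u n) t0 < inverse (real (Suc n))"
    "\<And>n. \<exists>g. g \<in> \<Gamma> (u n) \<and> dist g psl_one < inverse (real (Suc n)) \<and> g \<noteq> psl_one"
    by metis
  then obtain g where g: "\<And>n. g n \<in> \<Gamma> (u n)" "\<And>n. dist (g n) psl_one < inverse (real (Suc n))"
    "\<And>n. g n \<noteq> psl_one"
    by metis
  have DT: "\<And>v. v \<in> {0..1} \<Longrightarrow> \<Gamma> v \<in> DTF" using D by (simp add: D_path_def)
  have ut: "u \<longlonglongrightarrow> t0" by (rule conv_aux[OF u(2)])
  have g1: "g \<longlonglongrightarrow> psl_one" by (rule conv_aux[OF g(2)])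
  obtain r where r: "r > 0" "\<And>h. h \<in> \<Gamma> t0 \<Longrightarrow> dist h psl_one < r \<Longrightarrow> h = psl_one"
    using disc_ball[OF DT[OF t0] DTF_one[OF DT[OF t0]]] by blast
  define \<rho> where "\<rho> = r / 2"
  have \<rho>: "\<rho> > 0" "\<rho> < r" using r by (auto simp: \<rho>_def)
  define k where "k n = (LEAST k. \<rho> \<le> dist (psl_pow (g n) k) psl_one)" for n
  have ex: "\<exists>k. \<rho> \<le> dist (psl_pow (g n) k) psl_one" for n
    using escape[OF DT[OF u(1)] g(1) g(3) \<rho>(1)] by blast
  have k1: "\<rho> \<le> dist (psl_pow (g n) (k n)) psl_one" for n
    unfolding k_def by (rule LeastI_ex[OF ex])
  have k0: "k n \<noteq> 0" for n
  proof
    assume "k n = 0" then show False using k1[of n] \<rho>(1) by (simp add: pow_0)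
  qed
  define f where "f n = psl_pow (g n) (k n - 1)" for n
  have f1: "dist (f n) psl_one < \<rho>" for n
  proof -
    have "k n - 1 < k n" using k0[of n] by simp
    then have "\<not> \<rho> \<le> dist (psl_pow (g n) (k n - 1)) psl_one"
      unfolding k_def by (rule not_less_Least)
    then show ?thesis by (simp add: f_def)
  qed
  define \<psi> where "\<psi> n = psl_pow (g n) (k n)" for n
  have \<psi>f: "\<psi> n = psl_mult (f n) (g n)" for n
  proof -
    have "k n = (k n - 1) + 1" using k0[of n] by simp
    then have "\<psi> n = psl_pow (g n) ((k n - 1) + 1)" unfolding \<psi>_def by metis
    then show ?thesis by (simp only: psl_pow_add pow_1 f_def)
  qed
  have \<psi>G: "\<psi> n \<in> (\<Gamma> \<circ> u) n" for n unfolding \<psi>_def using pow_in[OF DT[OF u(1)] g(1)] by simp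
  obtain l \<sigma> where \<sigma>: "strict_mono \<sigma>" "(f \<circ> \<sigma>) \<longlonglongrightarrow> l"
    using psl_bw[of f \<rho>] f1 less_imp_le by blast
  have "(\<lambda>n. psl_mult ((f \<circ> \<sigma>) n) ((g \<circ> \<sigma>) n)) \<longlonglongrightarrow> psl_mult l psl_one"
    by (intro tendsto_psl_mult \<sigma>(2) LIMSEQ_subseq_LIMSEQ[OF g1 \<sigma>(1)])
  then have l\<psi>: "(\<psi> \<circ> \<sigma>) \<longlonglongrightarrow> l" by (simp add: psl_one_right \<psi>f o_def)
  have uu: "(\<forall>n. u n \<in> {0..1}) \<and> u \<longlonglongrightarrow> t0" using u(1) ut by blast
  have "chabauty_lim (\<Gamma> \<circ> u) (\<Gamma> t0)"
    using D t0 uu unfolding D_path_def by blast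
  then have "\<forall>\<psi>. (\<forall>n. \<psi> n \<in> (\<Gamma> \<circ> u) n) \<longrightarrow> (\<forall>x. (\<exists>r. strict_mono r \<and> limitin psl_top (\<psi> \<circ> r) x sequentially) \<longrightarrow> x \<in> \<Gamma> t0)"
    unfolding chabauty_lim_def by blast
  then have "l \<in> \<Gamma> t0" using \<psi>G \<sigma>(1) l\<psi> unfolding psl_top_euclidean limitin_canonical_iff by blast
  have le1: "dist l psl_one \<le> \<rho>"
    by (rule tendsto_le[OF trivial_limit_sequentially tendsto_const tendsto_dist[OF \<sigma>(2) tendsto_const]])
       (use f1 in \<open>auto simp: always_eventually less_imp_le\<close>)
  have le2: "\<rho> \<le> dist l psl_one"
    by (rule tendsto_le[OF trivial_limit_sequentially tendsto_dist[OF l\<psi> tendsto_const] tendsto_const])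
       (use k1 in \<open>auto simp: always_eventually \<psi>_def\<close>)
  have "l = psl_one" using r(2)[OF \<open>l \<in> \<Gamma> t0\<close>] le1 \<rho>(2) by simp
  then show False using le2 \<rho>(1) by simp
qed




lemma gp_cont: "Gamma_path \<Gamma> s \<psi> I j \<Longrightarrow> continuous_on I j"
  by (simp add: Gamma_path_def psl_top_euclidean)

lemma path_unique:
  assumes D: "D_path \<Gamma>" and p1: "Gamma_path \<Gamma> s \<psi> I1 j1" and p2: "Gamma_path \<Gamma> s \<psi> I2 j2"
    and u: "u \<in> I1" "u \<in> I2"
  shows "j1 u = j2 u"
proof -
  define K where "K = I1 \<inter> I2"
  have DT: "\<And>v. v \<in> {0..1} \<Longrightarrow> \<Gamma> v \<in> DTF" using D by (simp add: D_path_def)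
  have K01: "K \<subseteq> {0..1}" using p1 by (auto simp: K_def Gamma_path_def)
  have "is_interval K" using p1 p2 by (simp add: K_def Gamma_path_def is_interval_Int)
  then have conK: "connected K" by (simp add: is_interval_connected)
  have c1: "continuous_on K j1" using gp_cont[OF p1] by (rule continuous_on_subset) (auto simp: K_def)
  have c2: "continuous_on K j2" using gp_cont[OF p2] by (rule continuous_on_subset) (auto simp: K_def)
  define f where "f v = psl_mult (j1 v) (psl_inv (j2 v))" for v
  have cf: "continuous_on K f"
    unfolding continuous_on_def f_def
  proof
    fix x assume "x \<in> K"
    then have "(j1 \<longlongrightarrow> j1 x) (at x within K)" "(j2 \<longlongrightarrow> j2 x) (at x within K)"
      using c1 c2 by (auto simp: continuous_on_def)
    then show "((\<lambda>v. psl_mult (j1 v) (psl_inv (j2 v))) \<longlongrightarrow> psl_mult (j1 x) (psl_inv (j2 x))) (at x within K)"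
      by (intro tendsto_psl_mult tendsto_psl_inv)
  qed
  define T where "T = {v \<in> K. f v = psl_one}"
  have cl: "closedin (top_of_set K) T" unfolding T_def by (rule continuous_closedin_preimage_constant[OF cf])
  have inG: "f v \<in> \<Gamma> v" if "v \<in> K" for v
  proof -
    have "v \<in> {0..1}" using that K01 by auto
    moreover have "j1 v \<in> \<Gamma> v" "j2 v \<in> \<Gamma> v" using that p1 p2 by (auto simp: K_def Gamma_path_def)
    ultimately show ?thesis unfolding f_def by (intro DTF_mult DTF_inv DT)
  qed
  have op: "openin (top_of_set K) T"
    unfolding openin_euclidean_subtopology_iff
  proof (intro conjI ballI)
    show "T \<subseteq> K" by (auto simp: T_def)
  next
    fix v assume v: "v \<in> T"
    then have vK: "v \<in> K" "f v = psl_one" by (auto simp: T_def)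
    then have "v \<in> {0..1}" using K01 by auto
    then obtain \<epsilon> where \<epsilon>: "\<epsilon> > 0" "\<And>w g. w \<in> {0..1} \<Longrightarrow> dist w v < \<epsilon> \<Longrightarrow> g \<in> \<Gamma> w \<Longrightarrow> dist g psl_one < \<epsilon> \<Longrightarrow> g = psl_one"
      using unif_disc[OF D] by blast
    obtain \<delta> where \<delta>: "\<delta> > 0" "\<And>w. w \<in> K \<Longrightarrow> dist w v < \<delta> \<Longrightarrow> dist (f w) (f v) < \<epsilon>"
      using cf vK(1) \<epsilon>(1) unfolding continuous_on_iff by blast
    show "\<exists>e>0. \<forall>x'\<in>K. dist x' v < e \<longrightarrow> x' \<in> T"
    proof (intro exI[of _ "min \<delta> \<epsilon>"] conjI ballI impI)
      fix w assume w: "w \<in> K" "dist w v < min \<delta> \<epsilon>"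
      then have "f w = psl_one" using \<epsilon>(2)[of w "f w"] \<delta>(2)[of w] inG[of w] K01 vK(2) by auto
      then show "w \<in> T" using w by (simp add: T_def)
    qed (use \<epsilon> \<delta> in auto)
  qed
  have "s \<in> T" using p1 p2 by (auto simp: T_def K_def Gamma_path_def f_def psl_inv_right)
  then have "T = K" using conK cl op unfolding connected_clopen by blast
  then have "f u = psl_one" using u by (auto simp: T_def K_def)
  then show ?thesis unfolding f_def by (rule psl_cancel)
qed

lemma J_eq:
  assumes D: "D_path \<Gamma>" and p: "Gamma_path \<Gamma> s \<psi> I j" and t: "t \<in> I"
  shows "J \<Gamma> s t \<psi> = Some (j t)"
proof -
  have "t \<in> Imax \<Gamma> s \<psi>" using p t by (auto simp: Imax_def)
  moreover have "(THE g. \<exists>I j. Gamma_path \<Gamma> s \<psi> I j \<and> t \<in> I \<and> j t = g) = j t"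
  proof (rule the_equality)
    show "\<exists>I' j'. Gamma_path \<Gamma> s \<psi> I' j' \<and> t \<in> I' \<and> j' t = j t" using p t by blast
  next
    fix g assume "\<exists>I' j'. Gamma_path \<Gamma> s \<psi> I' j' \<and> t \<in> I' \<and> j' t = g"
    then obtain I' j' where "Gamma_path \<Gamma> s \<psi> I' j'" "t \<in> I'" "j' t = g" by blast
    then show "g = j t" using path_unique[OF D _ p _ t] by blast
  qed
  ultimately show ?thesis by (simp add: J_def)
qed

lemma rebase: "Gamma_path \<Gamma> s \<psi> I j \<Longrightarrow> t \<in> I \<Longrightarrow> Gamma_path \<Gamma> t (j t) I j"
  by (simp add: Gamma_path_def)

theorem mainTheorem11:
  fixes \<Gamma> :: "real \<Rightarrow> psl2c set" and s t :: real and H :: "psl2c set"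
  assumes "D_path \<Gamma>"
    and "s \<in> {0..1}" and "t \<in> {0..1}"
    and "psl_subgroup H" and "H \<subseteq> \<Gamma> s"
  shows "((\<forall>\<psi>\<in>H. J \<Gamma> s t \<psi> \<noteq> None) \<longleftrightarrow>
          ((\<forall>\<psi>\<in>H. J \<Gamma> s t \<psi> \<noteq> None) \<and> inj_on (\<lambda>\<psi>. the (J \<Gamma> s t \<psi>)) H \<and>
           (\<forall>a\<in>H. \<forall>b\<in>H. the (J \<Gamma> s t (psl_mult a b)) = psl_mult (the (J \<Gamma> s t a)) (the (J \<Gamma> s t b)))))
     \<and> ((\<forall>\<psi>\<in>H. J \<Gamma> s t \<psi> \<noteq> None) \<longleftrightarrow> (\<forall>\<psi>\<in>H. t \<in> Imax \<Gamma> s \<psi>))"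
proof -
  note D = assms(1)
  have DT: "\<And>v. v \<in> {0..1} \<Longrightarrow> \<Gamma> v \<in> DTF" using D by (simp add: D_path_def)
  have iff: "(\<forall>\<psi>\<in>H. J \<Gamma> s t \<psi> \<noteq> None) \<longleftrightarrow> (\<forall>\<psi>\<in>H. t \<in> Imax \<Gamma> s \<psi>)"
    by (simp add: J_def)
  have gp: "\<exists>I j. Gamma_path \<Gamma> s \<psi> I j \<and> t \<in> I" if "t \<in> Imax \<Gamma> s \<psi>" for \<psi>
    using that by (auto simp: Imax_def)
  have main: "inj_on (\<lambda>\<psi>. the (J \<Gamma> s t \<psi>)) H \<and>
           (\<forall>a\<in>H. \<forall>b\<in>H. the (J \<Gamma> s t (psl_mult a b)) = psl_mult (the (J \<Gamma> s t a)) (the (J \<Gamma> s t b)))"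
    if all: "\<forall>\<psi>\<in>H. t \<in> Imax \<Gamma> s \<psi>"
  proof
    show "inj_on (\<lambda>\<psi>. the (J \<Gamma> s t \<psi>)) H"
    proof (rule inj_onI)
      fix a b assume a: "a \<in> H" and b: "b \<in> H" and eq: "the (J \<Gamma> s t a) = the (J \<Gamma> s t b)"
      obtain Ia ja where pa: "Gamma_path \<Gamma> s a Ia ja" "t \<in> Ia" using gp all a by blast
      obtain Ib jb where pb: "Gamma_path \<Gamma> s b Ib jb" "t \<in> Ib" using gp all b by blast
      have "ja t = jb t" using eq J_eq[OF D pa] J_eq[OF D pb] by simp
      then have pb': "Gamma_path \<Gamma> t (ja t) Ib jb" using rebase[OF pb] by simp
      have "ja s = jb s"
        by (rule path_unique[OF D rebase[OF pa] pb']) (use pa pb in \<open>auto simp: Gamma_path_def\<close>)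
      then show "a = b" using pa pb by (simp add: Gamma_path_def)
    qed
  next
    show "\<forall>a\<in>H. \<forall>b\<in>H. the (J \<Gamma> s t (psl_mult a b)) = psl_mult (the (J \<Gamma> s t a)) (the (J \<Gamma> s t b))"
    proof (intro ballI)
      fix a b assume a: "a \<in> H" and b: "b \<in> H"
      obtain Ia ja where pa: "Gamma_path \<Gamma> s a Ia ja" "t \<in> Ia" using gp all a by blast
      obtain Ib jb where pb: "Gamma_path \<Gamma> s b Ib jb" "t \<in> Ib" using gp all b by blast
      define k where "k v = psl_mult (ja v) (jb v)" for v
      have "Gamma_path \<Gamma> s (psl_mult a b) (Ia \<inter> Ib) k"
        unfolding Gamma_path_def
      proof (intro conjI ballI)
        show "is_interval (Ia \<inter> Ib)" using pa pb by (simp add: Gamma_path_def is_interval_Int)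
        show "Ia \<inter> Ib \<subseteq> {0..1}" using pa by (auto simp: Gamma_path_def)
        show "s \<in> Ia \<inter> Ib" using pa pb by (auto simp: Gamma_path_def)
        show "k s = psl_mult a b" using pa pb by (auto simp: Gamma_path_def k_def)
        have c1: "continuous_on (Ia \<inter> Ib) ja" using gp_cont[OF pa(1)] by (rule continuous_on_subset) auto
        have c2: "continuous_on (Ia \<inter> Ib) jb" using gp_cont[OF pb(1)] by (rule continuous_on_subset) auto
        have "continuous_on (Ia \<inter> Ib) k"
          unfolding continuous_on_def k_def
        proof
          fix x assume "x \<in> Ia \<inter> Ib"
          then have "(ja \<longlongrightarrow> ja x) (at x within Ia \<inter> Ib)" "(jb \<longlongrightarrow> jb x) (at x within Ia \<inter> Ib)"
            using c1 c2 by (auto simp: continuous_on_def)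
          then show "((\<lambda>v. psl_mult (ja v) (jb v)) \<longlongrightarrow> psl_mult (ja x) (jb x)) (at x within Ia \<inter> Ib)"
            by (intro tendsto_psl_mult)
        qed
        then show "continuous_map (top_of_set (Ia \<inter> Ib)) psl_top k" by (simp add: psl_top_euclidean)
      next
        fix v assume v: "v \<in> Ia \<inter> Ib"
        then have "v \<in> {0..1}" "ja v \<in> \<Gamma> v" "jb v \<in> \<Gamma> v" using pa pb by (auto simp: Gamma_path_def)
        then show "k v \<in> \<Gamma> v" unfolding k_def by (intro DTF_mult DT)
      qed
      then have "J \<Gamma> s t (psl_mult a b) = Some (k t)" using J_eq[OF D] pa pb by blast
      then show "the (J \<Gamma> s t (psl_mult a b)) = psl_mult (the (J \<Gamma> s t a)) (the (J \<Gamma> s t b))"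
        using J_eq[OF D pa] J_eq[OF D pb] by (simp add: k_def)
    qed
  qed
  show ?thesis using iff main by blast
qed


end
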